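(* Let $X$ be a compact $T_1$ topological space. Then every contractive iterated function system on $X$ has a unique attractor, i.e. its induced Hutchinson operator $F:2^X\to 2^X$ has a unique fixed point.
   Context: An iterated function system (IFS) on $X$ is a finite family $\mathcal{F}=\{f_1,\dots,f_m\}$ of closed mappings $X\to X$ (mappings sending closed sets to closed sets; continuity not assumed). It is contractive if for every open cover $\mathcal{U}$ of $X$ there is $n\in\mathbb{N}$ such that for every sequence $(i_1,\dots,i_n)\in\{1,\dots,m\}^n$ the set $f_{i_1}\circ\cdots\circ f_{i_n}[X]$ is contained in some element of $\mathcal{U}$. $2^X$ denotes the family of nonempty closed subsets of $X$, the Hutchinson operator is $F(K)=\bigcup_{i=1}^m f_i[K]$, and an attractor is a fixed point $K\in 2^X$ of $F$. *)

theory Defs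
  imports "HOL-Analysis.Analysis"
begin

definition word_comp :: "('i \<Rightarrow> 'a \<Rightarrow> 'a) \<Rightarrow> 'i list \<Rightarrow> 'a \<Rightarrow> 'a" where
  "word_comp f ws = foldr (\<lambda>i g. f i \<circ> g) ws id"

definition is_IFS :: "'a topology \<Rightarrow> 'i set \<Rightarrow> ('i \<Rightarrow> 'a \<Rightarrow> 'a) \<Rightarrow> bool" where
  "is_IFS X I f \<longleftrightarrow> finite I \<and> I \<noteq> {} \<and>
     (\<forall>i\<in>I. f i ` topspace X \<subseteq> topspace X \<and> closed_map X X (f i))"

definition contractive_IFS :: "'a topology \<Rightarrow> 'i set \<Rightarrow> ('i \<Rightarrow> 'a \<Rightarrow> 'a) \<Rightarrow> bool" where
  "contractive_IFS X I f \<longleftrightarrow>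
     (\<forall>\<U>. (\<forall>U\<in>\<U>. openin X U) \<and> topspace X \<subseteq> \<Union>\<U> \<longrightarrow>
        (\<exists>n::nat. \<forall>ws. set ws \<subseteq> I \<and> length ws = n \<longrightarrow>
            (\<exists>U\<in>\<U>. word_comp f ws ` topspace X \<subseteq> U)))"

definition hutchinson :: "'i set \<Rightarrow> ('i \<Rightarrow> 'a \<Rightarrow> 'a) \<Rightarrow> 'a set \<Rightarrow> 'a set" where
  "hutchinson I f K = (\<Union>i\<in>I. f i ` K)"

definition attractor :: "'a topology \<Rightarrow> 'i set \<Rightarrow> ('i \<Rightarrow> 'a \<Rightarrow> 'a) \<Rightarrow> 'a set \<Rightarrow> bool" where
  "attractor X I f K \<longleftrightarrow> closedin X K \<and> K \<noteq> {} \<and> hutchinson I f K = K"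

end

theory Submission
  imports Defs
begin

lemma word_comp_Cons: "word_comp f (i # ws) = f i \<circ> word_comp f ws"
  by (simp add: word_comp_def)

lemma hut_pow_words:
  "(hutchinson I f ^^ n) S = (\<Union>ws\<in>{ws. set ws \<subseteq> I \<and> length ws = n}. word_comp f ws ` S)"
proof (induction n)
  case 0
  then show ?case by (simp add: word_comp_def)
next
  case (Suc n)
  show ?case
  proof (rule set_eqI, rule iffI)
    fix x assume "x \<in> (hutchinson I f ^^ Suc n) S"
    then obtain i ws y where "i \<in> I" "set ws \<subseteq> I" "length ws = n" "y \<in> S" "x = f i (word_comp f ws y)"
      using Suc by (auto simp: hutchinson_def)
    then show "x \<in> (\<Union>ws\<in>{ws. set ws \<subseteq> I \<and> length ws = Suc n}. word_comp f ws ` S)"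
      by (intro UN_I[of "i # ws"]) (auto simp: word_comp_Cons)
  next
    fix x assume "x \<in> (\<Union>ws\<in>{ws. set ws \<subseteq> I \<and> length ws = Suc n}. word_comp f ws ` S)"
    then obtain ws y where w: "set ws \<subseteq> I" "length ws = Suc n" "y \<in> S" "x = word_comp f ws y"
      by auto
    then obtain i vs where "ws = i # vs" by (cases ws) auto
    have "word_comp f vs y \<in> (hutchinson I f ^^ n) S"
      using Suc w \<open>ws = i # vs\<close> by auto
    with w \<open>ws = i # vs\<close> show "x \<in> (hutchinson I f ^^ Suc n) S"
      by (auto simp: hutchinson_def word_comp_Cons)
  qed
qed

lemma hut_mono: "A \<subseteq> B \<Longrightarrow> hutchinson I f A \<subseteq> hutchinson I f B"
  by (auto simp: hutchinson_def)

lemma hut_pow_mono: "A \<subseteq> B \<Longrightarrow> (hutchinson I f ^^ n) A \<subseteq> (hutchinson I f ^^ n) B"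
  by (induction n) (auto simp: hut_mono)

lemma hut_pow_sub: "hutchinson I f A \<subseteq> A \<Longrightarrow> (hutchinson I f ^^ n) A \<subseteq> A"
proof (induction n)
  case (Suc n)
  then have "hutchinson I f ((hutchinson I f ^^ n) A) \<subseteq> hutchinson I f A"
    by (simp add: hut_mono)
  then show ?case using Suc by simp
qed simp

lemma hut_pow_fix: "hutchinson I f A = A \<Longrightarrow> (hutchinson I f ^^ n) A = A"
  by (induction n) auto

lemma hut_closed:
  assumes "is_IFS X I f" "closedin X A"
  shows "closedin X (hutchinson I f A)"
  unfolding hutchinson_def
  using assms by (intro closedin_Union) (auto simp: is_IFS_def closed_map_def)

lemma hut_sub:
  assumes "is_IFS X I f" "A \<subseteq> topspace X"
  shows "hutchinson I f A \<subseteq> topspace X"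
  using assms by (fastforce simp: is_IFS_def hutchinson_def)

lemma hut_ne:
  assumes "is_IFS X I f" "A \<noteq> {}"
  shows "hutchinson I f A \<noteq> {}"
  using assms by (auto simp: is_IFS_def hutchinson_def)

lemma key:
  assumes t1: "t1_space X" and ifs: "is_IFS X I f" and con: "contractive_IFS X I f"
    and A: "closedin X A" "A \<noteq> {}" "hutchinson I f A \<subseteq> A"
    and x: "\<forall>n. x \<in> (hutchinson I f ^^ n) (topspace X)"
  shows "x \<in> A"
proof (rule ccontr)
  assume xA: "x \<notin> A"
  have xt: "x \<in> topspace X"
    using x[rule_format, of 0] by simp
  let ?U = "{topspace X - A, topspace X - {x}}"
  have "(\<forall>U\<in>?U. openin X U) \<and> topspace X \<subseteq> \<Union>?U"
    using A xA xt t1 closedin_t1_singleton by (auto intro!: openin_diff)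
  then obtain n where n: "\<And>ws. set ws \<subseteq> I \<Longrightarrow> length ws = n \<Longrightarrow>
      (\<exists>U\<in>?U. word_comp f ws ` topspace X \<subseteq> U)"
    using con unfolding contractive_IFS_def by meson
  obtain ws where ws: "set ws \<subseteq> I" "length ws = n" "x \<in> word_comp f ws ` topspace X"
    using x[rule_format, of n] by (auto simp: hut_pow_words)
  obtain a where a: "a \<in> A" using A by auto
  have "word_comp f ws a \<in> (hutchinson I f ^^ n) A"
    using ws a by (auto simp: hut_pow_words)
  then have wa: "word_comp f ws a \<in> A" using hut_pow_sub[OF A(3)] by blast
  have "a \<in> topspace X" using a A closedin_subset by blast
  then have "word_comp f ws a \<in> word_comp f ws ` topspace X" by blast
  then show False using n[OF ws(1,2)] ws(3) wa by auto
qed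

theorem theorem25:
  fixes X :: "'a topology" and I :: "'i set" and f :: "'i \<Rightarrow> 'a \<Rightarrow> 'a"
  assumes "compact_space X" and "t1_space X" and "topspace X \<noteq> {}"
    and "is_IFS X I f" and "contractive_IFS X I f"
  shows "\<exists>!K. attractor X I f K"
proof -
  let ?H = "hutchinson I f"
  define C where "C n = (?H ^^ n) (topspace X)" for n
  define K where "K = (\<Inter>n. C n)"
  have Csub: "C n \<subseteq> topspace X" for n
    unfolding C_def by (induction n) (auto intro: hut_sub[OF assms(4)] simp del: funpow.simps simp: funpow.simps(2)[unfolded comp_def] dest: hut_sub[OF assms(4)])
  have Ccl: "closedin X (C n)" for n
    unfolding C_def by (induction n) (auto intro: hut_closed[OF assms(4)])
  have Cne: "C n \<noteq> {}" for n
    unfolding C_def using assms(3) by (induction n) (simp_all add: hut_ne[OF assms(4)])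
  have HX: "?H (topspace X) \<subseteq> topspace X" using hut_sub[OF assms(4)] by blast
  have Cdec: "C (Suc n) \<subseteq> C n" for n
    unfolding C_def by (induction n) (auto simp: HX dest: hut_mono[of _ _ I f])
  have "decseq C" using Cdec by (simp add: decseq_SucI)
  then have Kne: "K \<noteq> {}"
    unfolding K_def using compact_space_imp_nest[OF assms(1), of C] Ccl Cne by blast
  have Kcl: "closedin X K"
    unfolding K_def using Ccl by (intro closedin_Inter) auto
  have HK: "?H K \<subseteq> K"
  proof -
    have "?H K \<subseteq> C n" for n
    proof -
      have "?H K \<subseteq> ?H (C n)" unfolding K_def by (rule hut_mono) auto
      also have "\<dots> = C (Suc n)" by (simp add: C_def)
      finally show ?thesis using Cdec by blast
    qed
    then show ?thesis unfolding K_def by blast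
  qed
  have Kx: "\<forall>n. x \<in> (?H ^^ n) (topspace X)" if "x \<in> K" for x
    using that unfolding K_def C_def by blast
  have KH: "K \<subseteq> ?H K"
  proof
    fix x assume "x \<in> K"
    show "x \<in> ?H K"
      by (rule key[OF assms(2,4,5) hut_closed[OF assms(4) Kcl] hut_ne[OF assms(4) Kne]
          hut_mono[OF HK] Kx[OF \<open>x \<in> K\<close>]])
  qed
  have attK: "attractor X I f K"
    using Kcl Kne HK KH by (auto simp: attractor_def)
  have uniq: "A = K" if "attractor X I f A" for A
  proof
    have A: "closedin X A" "A \<noteq> {}" "?H A = A" using that by (auto simp: attractor_def)
    have "A \<subseteq> C n" for n
    proof -
      have "A = (?H ^^ n) A" using hut_pow_fix[OF A(3)] by simp
      also have "\<dots> \<subseteq> C n" unfolding C_def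
        by (rule hut_pow_mono) (use A closedin_subset in blast)
      finally show ?thesis .
    qed
    then show "A \<subseteq> K" unfolding K_def by blast
    show "K \<subseteq> A"
      using key[OF assms(2,4,5) A(1,2)] A(3) Kx by blast
  qed
  show ?thesis using attK uniq by blast
qed

end
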